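(* Let $q=2^m$ with $m\ge 2$, and let $k$ be an integer with $1\le k\le q+1$ such that $\mathrm{Tr}_{q^2/q}(\mathcal C_{\{3,5\}})$ contains a codeword of weight $k$. Then $\mathcal B_k(\mathrm{Tr}_{q^2/q}(\mathcal C_{\{3,5\}}))$ is invariant under the action of $\mathrm{Stab}_{U_{q+1}}$, i.e. $\pi(B)\in \mathcal B_k(\mathrm{Tr}_{q^2/q}(\mathcal C_{\{3,5\}}))$ for every block $B$ in it and every $\pi\in\mathrm{Stab}_{U_{q+1}}$. In particular, if $k>3$, the incidence structure $(U_{q+1},\mathcal B_k(\mathrm{Tr}_{q^2/q}(\mathcal C_{\{3,5\}})))$ is a $3$-design.
   Context: $U_{q+1}$ is the set of $(q+1)$-th roots of unity in $\mathrm{GF}(q^2)$, viewed as a subset of the projective line $\mathrm{PG}(1,q^2)=\mathrm{GF}(q^2)\cup\{\infty\}$; coordinates are indexed by $U_{q+1}$. $\mathrm{Stab}_{U_{q+1}}$ is the setwise stabilizer of $U_{q+1}$ in $\mathrm{PGL}_2(\mathrm{GF}(q^2))$ acting on $\mathrm{PG}(1,q^2)$ by linear fractional transformations $x\mapsto\frac{ax+b}{cx+d}$. $\mathcal C_{\{3,5\}}=\{(a_3u^3+a_{q-2}u^{q-2}+a_5u^5+a_{q-4}u^{q-4})_{u\in U_{q+1}}: a_i\in\mathrm{GF}(q^2)\}$; $\mathrm{Tr}_{q^2/q}(\mathcal C)$ is obtained by applying $\mathrm{Tr}_{q^2/q}(x)=x+x^q$ coordinatewise to all codewords. For a code $\mathcal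 C$, $\mathcal B_k(\mathcal C)$ is the set of supports $\{u: c_u\neq0\}$ of the codewords of Hamming weight $k$. A $3$-design is a pair (point set, set of $k$-subsets called blocks) such that every $3$ points lie in the same positive number $\lambda$ of blocks. *)

theory Defs
  imports Main
begin

text \<open>GF(q^2) is modelled by a finite field type 'a with CARD('a) = q^2.
 PG(1,q^2) is modelled as 'a option, with None playing the role of infinity.\<close>

definition Uroots :: "nat \<Rightarrow> 'a::field set" where
  "Uroots q = {u. u ^ (q + 1) = 1}"

definition trq :: "nat \<Rightarrow> 'a::field \<Rightarrow> 'a" where
  "trq q x = x + x ^ q"

text \<open>Codewords are functions on the coordinate set U_{q+1} (extended by 0 outside).\<close>
definition code35 :: "nat \<Rightarrow> ('a::field \<Rightarrow> 'a) set" where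
  "code35 q = {(\<lambda>u. if u \<in> Uroots q then
       a3 * u ^ 3 + a4 * u ^ (q - 2) + a5 * u ^ 5 + a6 * u ^ (q - 4) else 0)
     | a3 a4 a5 a6. True}"

definition trace_code :: "nat \<Rightarrow> ('a::field \<Rightarrow> 'a) set \<Rightarrow> ('a \<Rightarrow> 'a) set" where
  "trace_code q C = (\<lambda>c. (\<lambda>u. trq q (c u))) ` C"

definition supp_on :: "'a set \<Rightarrow> ('a \<Rightarrow> 'b::zero) \<Rightarrow> 'a set" where
  "supp_on U c = {u \<in> U. c u \<noteq> 0}"

definition blocks_k :: "'a set \<Rightarrow> nat \<Rightarrow> ('a \<Rightarrow> 'b::zero) set \<Rightarrow> 'a set set" where
  "blocks_k U k C = {supp_on U c | c. c \<in> C \<and> card (supp_on U c) = k}"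

fun mob :: "'a::field \<times> 'a \<times> 'a \<times> 'a \<Rightarrow> 'a option \<Rightarrow> 'a option" where
  "mob (a, b, c, d) (Some x) = (if c * x + d = 0 then None else Some ((a * x + b) / (c * x + d)))"
| "mob (a, b, c, d) None = (if c = 0 then None else Some (a / c))"

definition stab :: "'a::field set \<Rightarrow> ('a \<times> 'a \<times> 'a \<times> 'a) set" where
  "stab U = {(a, b, c, d). a * d - b * c \<noteq> 0 \<and> mob (a, b, c, d) ` (Some ` U) = Some ` U}"

definition is_t_design :: "nat \<Rightarrow> 'a set \<Rightarrow> 'a set set \<Rightarrow> bool" where
  "is_t_design t P Bs \<longleftrightarrow> (\<forall>B\<in>Bs. B \<subseteq> P) \<and>
     (\<exists>lam::nat. lam > 0 \<and> (\<forall>T. T \<subseteq> P \<and> card T = t \<longrightarrow> card {B \<in> Bs. T \<subseteq> B} = lam))"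

end

theory Submission
  imports Defs "HOL-Computational_Algebra.Polynomial"
begin


lemma of_nat_card_zero: "(of_nat (card (UNIV::'a::{field,finite} set)) :: 'a) = 0"
proof -
  have b: "bij (\<lambda>x::'a. x + 1)"
    by (rule bij_betw_byWitness[where f'="\<lambda>x. x - 1"]) (simp_all add: algebra_simps)
  have "(\<Sum>x\<in>UNIV. x) = (\<Sum>x\<in>UNIV. (x::'a) + 1)"
    using sum.reindex_bij_betw[OF b, of "\<lambda>x. x"] by simp
  also have "\<dots> = (\<Sum>x\<in>UNIV. x) + of_nat (card (UNIV::'a set))"
    by (simp add: sum.distrib)
  finally show ?thesis by simp
qed

lemma fermat_card:
  fixes x :: "'a::{field,finite}"
  shows "x ^ card (UNIV::'a set) = x"
proof (cases "x = 0")
  case True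
  then show ?thesis by (simp add: finite_UNIV_card_ge_0)
next
  case False
  let ?S = "UNIV - {0::'a}"
  have b: "bij_betw (\<lambda>y. x * y) ?S ?S"
    by (rule bij_betw_byWitness[where f'="\<lambda>y. y / x"]) (use False in \<open>auto simp: field_simps\<close>)
  have "prod (\<lambda>y. y) ?S = prod (\<lambda>y. x * y) ?S"
    using prod.reindex_bij_betw[OF b, of "\<lambda>y. y"] by simp
  also have "\<dots> = x ^ card ?S * prod (\<lambda>y. y) ?S"
    by (simp add: prod.distrib)
  finally have e: "prod (\<lambda>y. y) ?S = x ^ card ?S * prod (\<lambda>y. y) ?S" .
  have nz: "prod (\<lambda>y. y) ?S \<noteq> 0" by simp
  have "x ^ card ?S = 1" using e nz by (metis mult_cancel_right1)
  moreover have "card ?S = card (UNIV::'a set) - 1" by (simp add: card_Diff_singleton)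
  moreover have "card (UNIV::'a set) > 0" by (simp add: finite_UNIV_card_ge_0)
  ultimately have "card (UNIV::'a set) = Suc (card ?S)" by simp
  then show ?thesis using \<open>x ^ card ?S = 1\<close> by (simp only: power_Suc) simp
qed

fun pm :: "'a::field \<times> 'a \<times> 'a \<times> 'a \<Rightarrow> 'a \<Rightarrow> 'a" where
  "pm (a, b, c, d) u = (a * u + b) / (c * u + d)"

locale gf =
  fixes q m :: nat and U :: "'a::{field,finite} set"
  assumes m2: "2 \<le> m" and qd: "q = 2 ^ m" and cardF: "card (UNIV::'a set) = q ^ 2"
    and Ud: "U = Uroots q"
begin

lemma two: "(2::'a) = 0"
proof -
  have "(of_nat (card (UNIV::'a set)) :: 'a) = 0" by (rule of_nat_card_zero)
  then have "(2::'a) ^ (2 * m) = 0" by (simp add: cardF qd power_mult)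
  then show ?thesis by simp
qed

lemma neg: "- (x::'a) = x"
proof -
  have "x + x = 2 * x" by simp
  then have "x + x = 0" by (simp add: two)
  then show ?thesis by (simp add: add_eq_0_iff2)
qed

lemma diff: "(x::'a) - y = x + y"
  by (metis diff_conv_add_uminus neg)

lemma addself: "(x::'a) + x = 0"
  by (metis diff diff_self)

lemma sq_add: "((x::'a) + y) ^ 2 = x ^ 2 + y ^ 2"
  by (simp add: power2_sum two)

lemma pow2_add: "((x::'a) + y) ^ (2 ^ j) = x ^ (2 ^ j) + y ^ (2 ^ j)"
proof (induction j)
  case 0
  then show ?case by simp
next
  case (Suc j)
  have "(x + y) ^ (2 ^ Suc j) = ((x + y) ^ (2 ^ j)) ^ 2"
    by (metis power_Suc2 power_mult)
  also have "\<dots> = (x ^ (2 ^ j)) ^ 2 + (y ^ (2 ^ j)) ^ 2" by (simp add: Suc sq_add)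
  also have "\<dots> = x ^ (2 ^ Suc j) + y ^ (2 ^ Suc j)"
    by (metis power_Suc2 power_mult)
  finally show ?case .
qed

lemma q4: "4 \<le> q"
proof -
  have "(2::nat) ^ 2 \<le> 2 ^ m" using m2 by (rule power_increasing) simp
  then show ?thesis by (simp add: qd)
qed

definition cj :: "'a \<Rightarrow> 'a" where "cj x = x ^ q"

lemma cj_add[simp]: "cj (x + y) = cj x + cj y"
  unfolding cj_def using pow2_add[of x y m] qd by simp

lemma cj_mult[simp]: "cj (x * y) = cj x * cj y"
  unfolding cj_def by (simp add: power_mult_distrib)

lemma cj_inverse[simp]: "cj (inverse x) = inverse (cj x)"
  unfolding cj_def by (simp add: power_inverse)

lemma cj_divide[simp]: "cj (x / y) = cj x / cj y"
  unfolding cj_def by (simp add: power_divide)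

lemma cj_power[simp]: "cj (x ^ n) = cj x ^ n"
  unfolding cj_def by (metis power_mult mult.commute)

lemma cj_0[simp]: "cj 0 = 0" and cj_1[simp]: "cj 1 = 1"
  unfolding cj_def using q4 by auto

lemma cj_cj[simp]: "cj (cj x) = x"
  unfolding cj_def using fermat_card[of x] by (simp add: power_mult[symmetric] cardF power2_eq_square)

lemma cj_eq0[simp]: "cj x = 0 \<longleftrightarrow> x = 0"
  by (metis cj_0 cj_cj)

lemma cj_inj: "cj x = cj y \<longleftrightarrow> x = y"
  by (metis cj_cj)

lemma trq_cj: "trq q x = x + cj x"
  by (simp add: trq_def cj_def)

lemma U_mem: "u \<in> U \<longleftrightarrow> u ^ (q + 1) = 1"
  by (simp add: Ud Uroots_def)

lemma U_nz: "u \<in> U \<Longrightarrow> u \<noteq> 0"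
  by (auto simp: U_mem)

lemma U_cj: "u \<in> U \<Longrightarrow> cj u = inverse u"
proof -
  assume "u \<in> U"
  then have "u ^ q * u = 1" by (simp add: U_mem mult.commute)
  then show ?thesis unfolding cj_def by (metis inverse_unique mult.commute)
qed

lemma U_iff: "u \<in> U \<longleftrightarrow> u * cj u = 1"
  by (simp add: U_mem cj_def mult.commute)

lemma fermat1: "x \<noteq> 0 \<Longrightarrow> (x::'a) ^ (q ^ 2 - 1) = 1"
proof -
  assume x: "x \<noteq> 0"
  have "x ^ (q ^ 2) = x" using fermat_card[of x] by (simp add: cardF)
  moreover have "q ^ 2 = Suc (q ^ 2 - 1)" using q4 by simp
  ultimately have "x * x ^ (q ^ 2 - 1) = x * 1" by (metis power_Suc mult_1_right)
  then show ?thesis using x by simp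
qed

lemma fiber_bound: "card {x::'a. x ^ (q - 1) = y} \<le> q - 1"
proof -
  define p where "p = monom (1::'a) (q - 1) - [:y:]"
  have c: "coeff p (q - 1) = 1" using q4 by (simp add: p_def coeff_monom coeff_pCons split: nat.split)
  then have pnz: "p \<noteq> 0" by auto
  have dg: "degree p \<le> q - 1"
    unfolding p_def by (rule degree_diff_le) (auto simp: degree_monom_le)
  have "{x::'a. x ^ (q - 1) = y} = {x. poly p x = 0}"
    by (simp add: p_def poly_monom)
  then show ?thesis using card_poly_roots_bound[OF pnz] dg by simp
qed

lemma U_card3: "3 \<le> card U"
proof (rule ccontr)
  assume "\<not> 3 \<le> card U"
  then have cu: "card U \<le> 2" by simp
  have sub: "UNIV - {0} \<subseteq> (\<Union>y\<in>U. {x::'a. x ^ (q - 1) = y})"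
  proof
    fix x :: 'a assume "x \<in> UNIV - {0}"
    then have x: "x \<noteq> 0" by simp
    have qq: "(q - 1) * (q + 1) = q ^ 2 - 1"
      using q4 by (cases q) (auto simp: power2_eq_square algebra_simps)
    have "(x ^ (q - 1)) ^ (q + 1) = x ^ (q ^ 2 - 1)"
      by (simp only: power_mult[symmetric] qq)
    also have "\<dots> = 1" using fermat1[OF x] .
    finally have "x ^ (q - 1) \<in> U" by (simp add: U_mem)
    then show "x \<in> (\<Union>y\<in>U. {x::'a. x ^ (q - 1) = y})" by blast
  qed
  have "card (UNIV - {0::'a}) \<le> card (\<Union>y\<in>U. {x::'a. x ^ (q - 1) = y})"
    by (rule card_mono[OF _ sub]) simp
  also have "\<dots> \<le> (\<Sum>y\<in>U. card {x::'a. x ^ (q - 1) = y})"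
    by (rule card_UN_le) simp
  also have "\<dots> \<le> (\<Sum>y\<in>U. q - 1)"
    by (rule sum_mono) (rule fiber_bound)
  also have "\<dots> = card U * (q - 1)" by simp
  also have "\<dots> \<le> 2 * (q - 1)" using cu by simp
  finally have "q ^ 2 - 1 \<le> 2 * (q - 1)" by (simp add: card_Diff_singleton cardF)
  moreover have "2 * (q - 1) < q ^ 2 - 1"
  proof -
    have "2 * q < q * q" using q4 by simp
    then have "2 * q - 2 < q * q - 1" using q4 by linarith
    then show ?thesis using q4 by (simp add: power2_eq_square right_diff_distrib')
  qed
  ultimately show False by simp
qed

lemma U3: obtains u1 u2 u3 where "u1 \<in> U" "u2 \<in> U" "u3 \<in> U" "u1 \<noteq> u2" "u1 \<noteq> u3" "u2 \<noteq> u3"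
proof -
  obtain S where "S \<subseteq> U" "card S = 3"
    using U_card3 obtain_subset_with_card_n by metis
  then show ?thesis using that by (auto simp: card_3_iff)
qed

lemma quad0:
  assumes "x \<noteq> y" "x \<noteq> z" "y \<noteq> z"
    and "P * x ^ 2 + R * x + S = (0::'a)" "P * y ^ 2 + R * y + S = 0" "P * z ^ 2 + R * z + S = 0"
  shows "P = 0 \<and> R = 0 \<and> S = 0"
proof -
  have "(x - y) * (P * (x + y) + R) = 0" using assms(4,5) by algebra
  then have 1: "P * (x + y) + R = 0" using assms(1) by simp
  have "(x - z) * (P * (x + z) + R) = 0" using assms(4,6) by algebra
  then have 2: "P * (x + z) + R = 0" using assms(2) by simp
  have "P * (y - z) = 0" using 1 2 by algebra
  then have P: "P = 0" using assms(3) by simp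
  then have R: "R = 0" using 1 by simp
  then show ?thesis using P assms(4) by simp
qed

lemma pm_inj:
  assumes "a * d - b * c \<noteq> 0" "c * u + d \<noteq> 0" "c * v + d \<noteq> 0"
    and "pm (a, b, c, d) u = pm (a, b, c, d) v"
  shows "u = (v::'a)"
proof -
  have "(a * u + b) * (c * v + d) = (a * v + b) * (c * u + d)"
    using assms(2-4) by (simp add: field_simps)
  then have "(a * d - b * c) * (u - v) = 0" by algebra
  then show ?thesis using assms(1) by simp
qed

lemma stab_basic:
  assumes "(a, b, c, d) \<in> stab U"
  shows "a * d - b * c \<noteq> 0"
    and "\<And>u. u \<in> U \<Longrightarrow> c * u + d \<noteq> 0 \<and> pm (a, b, c, d) u \<in> U \<and> mob (a, b, c, d) (Some u) = Some (pm (a, b, c, d) u)"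
    and "pm (a, b, c, d) ` U = U"
    and "inj_on (pm (a, b, c, d)) U"
proof -
  have det: "a * d - b * c \<noteq> 0" and img: "mob (a, b, c, d) ` (Some ` U) = Some ` U"
    using assms by (auto simp: stab_def)
  show "a * d - b * c \<noteq> 0" by (rule det)
  show pt: "c * u + d \<noteq> 0 \<and> pm (a, b, c, d) u \<in> U \<and> mob (a, b, c, d) (Some u) = Some (pm (a, b, c, d) u)"
    if u: "u \<in> U" for u
  proof -
    have m: "mob (a, b, c, d) (Some u) \<in> Some ` U" using img u by blast
    then have nz: "c * u + d \<noteq> 0" by (auto split: if_splits)
    then show ?thesis using m by auto
  qed
  show "pm (a, b, c, d) ` U = U"
  proof
    show "pm (a, b, c, d) ` U \<subseteq> U" using pt by auto
    show "U \<subseteq> pm (a, b, c, d) ` U"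
    proof
      fix w assume w: "w \<in> U"
      then have "Some w \<in> mob (a, b, c, d) ` (Some ` U)" using img by simp
      then obtain u where u: "u \<in> U" and e: "mob (a, b, c, d) (Some u) = Some w" by auto
      then have "pm (a, b, c, d) u = w" using pt[OF u] by simp
      then show "w \<in> pm (a, b, c, d) ` U" using u by blast
    qed
  qed
  show "inj_on (pm (a, b, c, d)) U"
    by (rule inj_onI) (use pt det pm_inj in blast)
qed

lemma cj_lin_U: "u \<in> U \<Longrightarrow> cj (a * u + b) * u = cj a + cj b * u"
  using U_nz[of u] by (simp add: U_cj field_simps)

lemma stab_rel:
  assumes "(a, b, c, d) \<in> stab U" and u: "u \<in> U"
  shows "(a * cj b - c * cj d) * u ^ 2 + (a * cj a + b * cj b - c * cj c - d * cj d) * u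
           + (b * cj a - d * cj c) = 0"
proof -
  note pt = stab_basic(2)[OF assms(1) u]
  let ?X = "a * u + b" and ?Y = "c * u + d"
  have Y: "?Y \<noteq> 0" using pt by simp
  have "pm (a, b, c, d) u * cj (pm (a, b, c, d) u) = 1" using pt by (simp add: U_iff)
  then have "?X / ?Y * (cj ?X / cj ?Y) = 1" by simp
  then have e1: "?X * cj ?X = ?Y * cj ?Y" using Y by (simp add: field_simps split: if_splits)
  then have "?X * (cj ?X * u) = ?Y * (cj ?Y * u)" by (simp add: mult.assoc[symmetric])
  then have "?X * (cj a + cj b * u) = ?Y * (cj c + cj d * u)" by (simp only: cj_lin_U[OF u])
  then show ?thesis by algebra
qed

lemma stab_kappa:
  assumes M: "(a, b, c, d) \<in> stab U"
  obtains k where "k * cj k = 1" "c = k * cj b" "d = k * cj a"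
proof -
  obtain u1 u2 u3 where u: "u1 \<in> U" "u2 \<in> U" "u3 \<in> U" "u1 \<noteq> u2" "u1 \<noteq> u3" "u2 \<noteq> u3"
    by (rule U3)
  have "a * cj b - c * cj d = 0 \<and> a * cj a + b * cj b - c * cj c - d * cj d = 0 \<and> b * cj a - d * cj c = 0"
    by (rule quad0[OF u(4-6) stab_rel[OF M u(1)] stab_rel[OF M u(2)] stab_rel[OF M u(3)]])
  then have P: "c * cj d = a * cj b" and R: "d * cj d - b * cj b = a * cj a - c * cj c"
    and S: "d * cj c = b * cj a"
    by (simp_all add: algebra_simps)
  have det: "a * d - b * c \<noteq> 0" by (rule stab_basic(1)[OF M])
  define D where "D = cj a * cj d - cj b * cj c"
  have "D = cj (a * d - b * c)" by (simp add: D_def diff)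
  then have D: "D \<noteq> 0" using det by simp
  define k where "k = (a * cj a - c * cj c) / D"
  have d: "d = k * cj a"
  proof -
    have "d * D = cj a * (d * cj d) - cj b * (d * cj c)" by (simp add: D_def algebra_simps)
    also have "\<dots> = cj a * (d * cj d - b * cj b)" using S by (simp add: algebra_simps)
    also have "\<dots> = cj a * (a * cj a - c * cj c)" using R by simp
    finally show ?thesis using D by (simp add: k_def field_simps)
  qed
  have c: "c = k * cj b"
  proof -
    have "c * D = cj a * (c * cj d) - cj b * (c * cj c)" by (simp add: D_def algebra_simps)
    also have "\<dots> = cj b * (a * cj a - c * cj c)" using P by (simp add: algebra_simps)
    finally show ?thesis using D by (simp add: k_def field_simps)
  qed
  have e1: "a * cj a + b * cj b = c * cj c + d * cj d" using R by (simp add: algebra_simps)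
  have e2: "c * cj c + d * cj d = (k * cj k) * (a * cj a + b * cj b)" by (simp add: c d algebra_simps)
  have e: "(1 - k * cj k) * (a * cj a + b * cj b) = 0" using e1 e2 by algebra
  have "a * d - b * c = k * (a * cj a - b * cj b)" by (simp add: c d algebra_simps)
  then have "a * cj a - b * cj b \<noteq> 0" using det by auto
  then have "a * cj a + b * cj b \<noteq> 0" by (simp add: diff)
  then have "1 - k * cj k = 0" using e by simp
  then show ?thesis using that c d by simp
qed

end


context gf
begin


lemma U_pow_inv: "u \<in> U \<Longrightarrow> j \<le> q + 1 \<Longrightarrow> u ^ (q + 1 - j) = inverse (u ^ j)"
proof -
  assume u: "u \<in> U" and j: "j \<le> q + 1"
  have "u ^ (q + 1 - j) * u ^ j = u ^ (q + 1)" using j by (simp add: power_add[symmetric])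
  also have "\<dots> = 1" using u by (simp add: U_mem)
  finally have "u ^ j * u ^ (q + 1 - j) = 1" by (simp add: mult.commute)
  then show ?thesis by (rule inverse_unique[symmetric])
qed

lemma cw_form:
  assumes "c \<in> trace_code q (code35 q)"
  obtains B D where "\<And>u. u \<in> U \<Longrightarrow> c u = trq q (B * u ^ 3 + D * u ^ 5)"
proof -
  obtain a3 a4 a5 a6 where c: "c = (\<lambda>u. trq q (if u \<in> Uroots q then
       a3 * u ^ 3 + a4 * u ^ (q - 2) + a5 * u ^ 5 + a6 * u ^ (q - 4) else 0))"
    using assms by (auto simp: trace_code_def code35_def)
  have "c u = trq q ((a3 + cj a4) * u ^ 3 + (a5 + cj a6) * u ^ 5)" if u: "u \<in> U" for u
  proof -
    have e2: "u ^ (q - 2) = inverse (u ^ 3)" using U_pow_inv[OF u, of 3] q4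
      by (simp add: numeral_eq_Suc)
    have e4: "u ^ (q - 4) = inverse (u ^ 5)" using U_pow_inv[OF u, of 5] q4
      by (simp add: numeral_eq_Suc)
    have cu: "cj u = inverse u" by (rule U_cj[OF u])
    show ?thesis using u
      by (simp add: c Ud[symmetric] e2 e4 trq_cj cu power_inverse algebra_simps)
  qed
  then show ?thesis using that by blast
qed

lemma cw_mk: "\<exists>c \<in> trace_code q (code35 q). \<forall>u \<in> U. c u = trq q (B * u ^ 3 + D * u ^ 5)"
proof -
  let ?c0 = "(\<lambda>u. if u \<in> Uroots q then
       B * u ^ 3 + 0 * u ^ (q - 2) + D * u ^ 5 + 0 * u ^ (q - 4) else 0)"
  have "?c0 \<in> code35 q" unfolding code35_def by blast
  then have m: "(\<lambda>u. trq q (?c0 u)) \<in> trace_code q (code35 q)" unfolding trace_code_def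
    by (rule image_eqI[rotated]) simp
  have v: "\<forall>u \<in> U. trq q (?c0 u) = trq q (B * u ^ 3 + D * u ^ 5)"
    by (simp add: Ud)
  show ?thesis by (rule bexI[of _ "\<lambda>u. trq q (?c0 u)"]) (use m v in simp_all)
qed

lemma H_form: "u \<in> U \<Longrightarrow> u ^ 5 * trq q (B * u ^ 3 + D * u ^ 5)
   = D * u ^ 10 + B * u ^ 8 + cj B * u ^ 2 + cj D"
  using U_nz[of u] by (simp add: trq_cj U_cj power_inverse field_simps)

lemma sq_lin: "(a * u + b) ^ 2 = a ^ 2 * u ^ 2 + (b::'a) ^ 2"
  using sq_add[of "a * u" b] by (simp add: power_mult_distrib)

lemma pow8_lin: "(a * u + b) ^ 8 = a ^ 8 * u ^ 8 + (b::'a) ^ 8"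
  using pow2_add[of "a * u" b 3] by (simp add: power_mult_distrib)

lemma K_expand:
  "D * (a * u + b) ^ 10 + B * (a * u + b) ^ 8 * (c * u + d) ^ 2
   + cj B * (a * u + b) ^ 2 * (c * u + d) ^ 8 + cj D * (c * u + d) ^ 10
   = (D * a ^ 10 + B * a ^ 8 * c ^ 2 + cj B * a ^ 2 * c ^ 8 + cj D * c ^ 10) * u ^ 10
   + (D * a ^ 8 * b ^ 2 + B * a ^ 8 * d ^ 2 + cj B * b ^ 2 * c ^ 8 + cj D * c ^ 8 * d ^ 2) * u ^ 8
   + (D * a ^ 2 * b ^ 8 + B * b ^ 8 * c ^ 2 + cj B * a ^ 2 * d ^ 8 + cj D * c ^ 2 * d ^ 8) * u ^ 2
   + (D * b ^ 10 + B * b ^ 8 * d ^ 2 + cj B * b ^ 2 * d ^ 8 + cj D * d ^ 10)"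
proof -
  have t1: "(a * u + b) ^ 10 = (a * u + b) ^ 8 * (a * u + b) ^ 2"
    by (simp add: power_add[symmetric])
  have t2: "(c * u + d) ^ 10 = (c * u + d) ^ 8 * (c * u + d) ^ 2"
    by (simp add: power_add[symmetric])
  show ?thesis
    unfolding t1 t2 sq_lin pow8_lin
    by (simp add: algebra_simps power_add[symmetric])
qed

lemma rho_ex:
  assumes "e * cj e = 1"
  obtains r where "r \<noteq> 0" "cj r = r * e"
proof (cases "e = 1")
  case True
  then show ?thesis using that[of 1] by simp
next
  case False
  have "1 + cj e \<noteq> 0"
  proof
    assume "1 + cj e = 0"
    then have "cj e = - 1" by (simp add: eq_neg_iff_add_eq_0 add.commute)
    then have "cj e = 1" by (simp add: neg)
    then have "e = 1" by (metis cj_1 cj_cj)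
    then show False using False by simp
  qed
  moreover have "cj (1 + cj e) = (1 + cj e) * e"
    using assms by (simp add: algebra_simps)
  ultimately show ?thesis using that by blast
qed

lemma P_rel:
  assumes k: "k * cj k = 1" and c: "c = k * cj b" and d: "d = k * cj a"
  shows "D * b ^ 10 + B * b ^ 8 * d ^ 2 + cj B * b ^ 2 * d ^ 8 + cj D * d ^ 10
       = k ^ 10 * cj (D * a ^ 10 + B * a ^ 8 * c ^ 2 + cj B * a ^ 2 * c ^ 8 + cj D * c ^ 10)"
    and "D * a ^ 2 * b ^ 8 + B * b ^ 8 * c ^ 2 + cj B * a ^ 2 * d ^ 8 + cj D * c ^ 2 * d ^ 8
       = k ^ 10 * cj (D * a ^ 8 * b ^ 2 + B * a ^ 8 * d ^ 2 + cj B * b ^ 2 * c ^ 8 + cj D * c ^ 8 * d ^ 2)"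
proof -
  have k0: "k \<noteq> 0" using k by auto
  have ck: "cj k = inverse k" using k by (simp add: inverse_unique)
  show "D * b ^ 10 + B * b ^ 8 * d ^ 2 + cj B * b ^ 2 * d ^ 8 + cj D * d ^ 10
       = k ^ 10 * cj (D * a ^ 10 + B * a ^ 8 * c ^ 2 + cj B * a ^ 2 * c ^ 8 + cj D * c ^ 10)"
    using k0 by (simp add: c d ck power_mult_distrib power_inverse field_simps)
  show "D * a ^ 2 * b ^ 8 + B * b ^ 8 * c ^ 2 + cj B * a ^ 2 * d ^ 8 + cj D * c ^ 2 * d ^ 8
       = k ^ 10 * cj (D * a ^ 8 * b ^ 2 + B * a ^ 8 * d ^ 2 + cj B * b ^ 2 * c ^ 8 + cj D * c ^ 8 * d ^ 2)"
    using k0 by (simp add: c d ck power_mult_distrib power_inverse field_simps)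
qed

lemma transform:
  assumes M: "(a, b, c, d) \<in> stab U"
  obtains B' D' where "\<And>u. u \<in> U \<Longrightarrow> (trq q (B' * u ^ 3 + D' * u ^ 5) = 0 \<longleftrightarrow>
      trq q (B * pm (a, b, c, d) u ^ 3 + D * pm (a, b, c, d) u ^ 5) = 0)"
proof -
  obtain k where k: "k * cj k = 1" and c: "c = k * cj b" and d: "d = k * cj a"
    by (rule stab_kappa[OF M])
  have "k ^ 10 * cj (k ^ 10) = 1" using k by (simp add: power_mult_distrib[symmetric])
  then obtain r where r0: "r \<noteq> 0" and r: "cj r = r * k ^ 10" by (rule rho_ex)
  define P5 where "P5 = D * a ^ 10 + B * a ^ 8 * c ^ 2 + cj B * a ^ 2 * c ^ 8 + cj D * c ^ 10"
  define P4 where "P4 = D * a ^ 8 * b ^ 2 + B * a ^ 8 * d ^ 2 + cj B * b ^ 2 * c ^ 8 + cj D * c ^ 8 * d ^ 2"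
  define P1 where "P1 = D * a ^ 2 * b ^ 8 + B * b ^ 8 * c ^ 2 + cj B * a ^ 2 * d ^ 8 + cj D * c ^ 2 * d ^ 8"
  define P0 where "P0 = D * b ^ 10 + B * b ^ 8 * d ^ 2 + cj B * b ^ 2 * d ^ 8 + cj D * d ^ 10"
  have rel0: "P0 = k ^ 10 * cj P5" and rel1: "P1 = k ^ 10 * cj P4"
    unfolding P0_def P5_def P1_def P4_def using P_rel[OF k c d] by blast+
  have key: "trq q ((r * P4) * u ^ 3 + (r * P5) * u ^ 5) = 0 \<longleftrightarrow>
      trq q (B * pm (a, b, c, d) u ^ 3 + D * pm (a, b, c, d) u ^ 5) = 0" if u: "u \<in> U" for u
  proof -
    note pt = stab_basic(2)[OF M u]
    define w where "w = pm (a, b, c, d) u"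
    define Y where "Y = c * u + d"
    have Y0: "Y \<noteq> 0" using pt by (simp add: Y_def)
    have w: "w \<in> U" using pt by (simp add: w_def)
    have aub: "a * u + b = w * Y" using Y0 by (simp add: w_def Y_def)
    have "u ^ 5 * trq q ((r * P4) * u ^ 3 + (r * P5) * u ^ 5)
        = (r * P5) * u ^ 10 + (r * P4) * u ^ 8 + cj (r * P4) * u ^ 2 + cj (r * P5)"
      by (rule H_form[OF u])
    also have "\<dots> = r * (P5 * u ^ 10 + P4 * u ^ 8 + P1 * u ^ 2 + P0)"
      by (simp add: r rel0 rel1 algebra_simps)
    also have "P5 * u ^ 10 + P4 * u ^ 8 + P1 * u ^ 2 + P0 =
       D * (a * u + b) ^ 10 + B * (a * u + b) ^ 8 * (c * u + d) ^ 2
       + cj B * (a * u + b) ^ 2 * (c * u + d) ^ 8 + cj D * (c * u + d) ^ 10"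
      unfolding P5_def P4_def P1_def P0_def by (rule K_expand[symmetric])
    also have "\<dots> = Y ^ 10 * (D * w ^ 10 + B * w ^ 8 + cj B * w ^ 2 + cj D)"
      unfolding aub Y_def[symmetric] by (simp add: power_mult_distrib algebra_simps power_add[symmetric])
    also have "D * w ^ 10 + B * w ^ 8 + cj B * w ^ 2 + cj D = w ^ 5 * trq q (B * w ^ 3 + D * w ^ 5)"
      by (rule H_form[OF w, symmetric])
    finally have e: "u ^ 5 * trq q ((r * P4) * u ^ 3 + (r * P5) * u ^ 5)
       = r * (Y ^ 10 * (w ^ 5 * trq q (B * w ^ 3 + D * w ^ 5)))" .
    have "u \<noteq> 0" "w \<noteq> 0" using U_nz u w by auto
    then show ?thesis using e r0 Y0 by (auto simp: w_def)
  qed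
  show ?thesis by (rule that[OF key])
qed

lemma mob_pm: "c * u + d \<noteq> 0 \<Longrightarrow> mob (a, b, c, d) (Some u) = Some (pm (a, b, c, d) u)"
  by simp

lemma adj_stab:
  assumes M: "(a, b, c, d) \<in> stab U"
  shows "(d, - b, - c, a) \<in> stab U" and "\<And>u. u \<in> U \<Longrightarrow> pm (d, - b, - c, a) (pm (a, b, c, d) u) = u"
proof -
  note det = stab_basic(1)[OF M]
  have inv: "- c * pm (a, b, c, d) u + a \<noteq> 0 \<and> pm (d, - b, - c, a) (pm (a, b, c, d) u) = u"
    if u: "u \<in> U" for u
  proof -
    have Y: "c * u + d \<noteq> 0" using stab_basic(2)[OF M u] by simp
    have e: "- c * pm (a, b, c, d) u + a = (a * d - b * c) / (c * u + d)"
      using Y by (simp add: field_simps del: neg diff)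
    then have n: "- c * pm (a, b, c, d) u + a \<noteq> 0" using det Y by simp
    have "pm (d, - b, - c, a) (pm (a, b, c, d) u) = (d * pm (a, b, c, d) u - b) / (- c * pm (a, b, c, d) u + a)"
      by simp
    also have "d * pm (a, b, c, d) u - b = u * ((a * d - b * c) / (c * u + d))"
      using Y by (simp add: field_simps del: neg diff)
    also have "u * ((a * d - b * c) / (c * u + d)) / (- c * pm (a, b, c, d) u + a) = u"
      using Y det e by simp
    finally show ?thesis using n by simp
  qed
  then show "\<And>u. u \<in> U \<Longrightarrow> pm (d, - b, - c, a) (pm (a, b, c, d) u) = u" by blast
  have img: "mob (d, - b, - c, a) ` (Some ` U) = Some ` U"
  proof
    show "mob (d, - b, - c, a) ` Some ` U \<subseteq> Some ` U"
    proof
      fix z assume "z \<in> mob (d, - b, - c, a) ` Some ` U"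
      then obtain v where v: "v \<in> U" and z: "z = mob (d, - b, - c, a) (Some v)" by auto
      obtain u where u: "u \<in> U" and vu: "v = pm (a, b, c, d) u"
        using stab_basic(3)[OF M] v by blast
      have i: "- c * v + a \<noteq> 0 \<and> pm (d, - b, - c, a) v = u"
        using inv[OF u] unfolding vu[symmetric] .
      have "z = Some u" unfolding z using mob_pm[of "- c" v a d "- b"] i by simp
      then show "z \<in> Some ` U" using u by blast
    qed
    show "Some ` U \<subseteq> mob (d, - b, - c, a) ` Some ` U"
    proof
      fix z assume "z \<in> Some ` U"
      then obtain u where u: "u \<in> U" and z: "z = Some u" by auto
      have v: "pm (a, b, c, d) u \<in> U" using stab_basic(2)[OF M u] by simp
      have "mob (d, - b, - c, a) (Some (pm (a, b, c, d) u)) = Some u"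
        using inv[OF u] mob_pm[of "- c" "pm (a, b, c, d) u" a d "- b"] by simp
      then show "z \<in> mob (d, - b, - c, a) ` Some ` U" using v z by (metis image_eqI)
    qed
  qed
  have "d * a - (- b) * (- c) \<noteq> 0" using det by (simp add: algebra_simps del: neg diff)
  then show "(d, - b, - c, a) \<in> stab U" using img by (simp add: stab_def del: neg diff)
qed

lemma code_pre:
  assumes M: "(a, b, c, d) \<in> stab U" and c0: "c0 \<in> trace_code q (code35 q)"
  obtains c' where "c' \<in> trace_code q (code35 q)"
    "\<And>u. u \<in> U \<Longrightarrow> (c' u = 0 \<longleftrightarrow> c0 (pm (a, b, c, d) u) = 0)"
proof -
  obtain B D where BD: "\<And>u. u \<in> U \<Longrightarrow> c0 u = trq q (B * u ^ 3 + D * u ^ 5)"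
    using cw_form[OF c0] by blast
  obtain B' D' where tr: "\<And>u. u \<in> U \<Longrightarrow> (trq q (B' * u ^ 3 + D' * u ^ 5) = 0 \<longleftrightarrow>
      trq q (B * pm (a, b, c, d) u ^ 3 + D * pm (a, b, c, d) u ^ 5) = 0)"
    using transform[OF M, where B=B and D=D] by blast
  obtain c' where c': "c' \<in> trace_code q (code35 q)" and v: "\<forall>u \<in> U. c' u = trq q (B' * u ^ 3 + D' * u ^ 5)"
    using cw_mk by blast
  have "c' u = 0 \<longleftrightarrow> c0 (pm (a, b, c, d) u) = 0" if u: "u \<in> U" for u
  proof -
    have "pm (a, b, c, d) u \<in> U" using stab_basic(2)[OF M u] by simp
    then show ?thesis using tr[OF u] v u BD by simp
  qed
  then show ?thesis using that c' by blast
qed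

lemma block_image:
  assumes Bb: "B \<in> blocks_k U k (trace_code q (code35 q))" and M: "(a, b, c, d) \<in> stab U"
  shows "pm (a, b, c, d) ` B \<in> blocks_k U k (trace_code q (code35 q))"
proof -
  obtain c0 where c0: "c0 \<in> trace_code q (code35 q)" and B: "B = supp_on U c0" and k: "card B = k"
    using Bb by (auto simp: blocks_k_def)
  note N = adj_stab(1)[OF M]
  obtain c' where c': "c' \<in> trace_code q (code35 q)"
    and z: "\<And>v. v \<in> U \<Longrightarrow> (c' v = 0 \<longleftrightarrow> c0 (pm (d, - b, - c, a) v) = 0)"
    using code_pre[OF N c0] by blast
  have bk: "pm (a, b, c, d) (pm (d, - b, - c, a) v) = v" if "v \<in> U" for v
    using adj_stab(2)[OF N that] by simp
  have BU: "B \<subseteq> U" using B by (auto simp: supp_on_def)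
  have s: "supp_on U c' = pm (a, b, c, d) ` B"
  proof
    show "supp_on U c' \<subseteq> pm (a, b, c, d) ` B"
    proof
      fix v assume "v \<in> supp_on U c'"
      then have v: "v \<in> U" and nz: "c' v \<noteq> 0" by (auto simp: supp_on_def)
      have uU: "pm (d, - b, - c, a) v \<in> U" using stab_basic(2)[OF N v] by simp
      then have "pm (d, - b, - c, a) v \<in> B" using z[OF v] nz B by (auto simp: supp_on_def)
      then show "v \<in> pm (a, b, c, d) ` B" using bk[OF v] by (metis image_eqI)
    qed
    show "pm (a, b, c, d) ` B \<subseteq> supp_on U c'"
    proof
      fix v assume "v \<in> pm (a, b, c, d) ` B"
      then obtain u where u: "u \<in> B" and vu: "v = pm (a, b, c, d) u" by auto
      have uU: "u \<in> U" using u BU by auto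
      have vU: "v \<in> U" using stab_basic(2)[OF M uU] vu by simp
      have "pm (d, - b, - c, a) v = u" using adj_stab(2)[OF M uU] vu by simp
      then have "c' v \<noteq> 0" using z[OF vU] u B by (auto simp: supp_on_def)
      then show "v \<in> supp_on U c'" using vU by (simp add: supp_on_def)
    qed
  qed
  have "card (pm (a, b, c, d) ` B) = k"
    using card_image[OF inj_on_subset[OF stab_basic(4)[OF M] BU]] k by simp
  then show ?thesis using s c' unfolding blocks_k_def by (metis (mono_tags, lifting) mem_Collect_eq)
qed

lemma part1:
  assumes Bb: "B \<in> blocks_k U k (trace_code q (code35 q))" and M: "M \<in> stab U"
  shows "mob M ` (Some ` B) \<in> (\<lambda>X. Some ` X) ` blocks_k U k (trace_code q (code35 q))"
proof -
  obtain a b c d where Md: "M = (a, b, c, d)" by (cases M) auto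
  have BU: "B \<subseteq> U" using Bb by (auto simp: blocks_k_def supp_on_def)
  have "mob M ` (Some ` B) = Some ` (pm (a, b, c, d) ` B)"
  proof -
    have "mob M (Some u) = Some (pm (a, b, c, d) u)" if "u \<in> B" for u
      using stab_basic(2)[OF M[unfolded Md]] that BU Md by blast
    then show ?thesis by (auto simp: image_image)
  qed
  then show ?thesis using block_image[OF Bb M[unfolded Md]] by blast
qed

lemma cj_minus[simp]: "cj (- x) = - cj x"
  by (simp add: neg)

lemma cj_diff[simp]: "cj (x - y) = cj x - cj y"
  by (simp add: diff)

lemma pm_comp:
  assumes "c * u + d \<noteq> 0" "C * pm (a, b, c, d) u + D \<noteq> 0"
  shows "(C * a + D * c) * u + (C * b + D * d) \<noteq> 0"
    and "pm (A * a + B * c, A * b + B * d, C * a + D * c, C * b + D * d) u = pm (A, B, C, D) (pm (a, b, c, d) u)"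
proof -
  have e: "(C * a + D * c) * u + (C * b + D * d) = (C * pm (a, b, c, d) u + D) * (c * u + d)"
    using assms(1) by (simp add: field_simps)
  then show "(C * a + D * c) * u + (C * b + D * d) \<noteq> 0" using assms by simp
  have e2: "(A * a + B * c) * u + (A * b + B * d) = (A * pm (a, b, c, d) u + B) * (c * u + d)"
    using assms(1) by (simp add: field_simps)
  show "pm (A * a + B * c, A * b + B * d, C * a + D * c, C * b + D * d) u = pm (A, B, C, D) (pm (a, b, c, d) u)"
    using e e2 assms by simp
qed

lemma cj_diff_U: "x \<in> U \<Longrightarrow> y \<in> U \<Longrightarrow> cj (x - y) = (y - x) / (x * y)"
  using U_nz[of x] U_nz[of y] by (simp add: U_cj field_simps)

lemma cj_fix_frac:
  assumes "Y \<noteq> 0" "cj X * Y = X * cj Y"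
  shows "cj (X / Y) = X / Y"
proof -
  have "cj Y \<noteq> 0" using assms(1) by simp
  then show ?thesis using assms by (simp add: field_simps)
qed

lemma claimA:
  assumes u: "u \<in> U" "u1 \<in> U" "u2 \<in> U" "u3 \<in> U" and d: "u1 \<noteq> u2" "u2 \<noteq> u3" "u \<noteq> u3"
  shows "cj ((u2 - u3) * (u - u1) / ((u2 - u1) * (u - u3))) = (u2 - u3) * (u - u1) / ((u2 - u1) * (u - u3))"
proof (rule cj_fix_frac)
  show "(u2 - u1) * (u - u3) \<noteq> 0" using d by auto
  have nz: "u * u1 * u2 * u3 \<noteq> 0" using U_nz u by auto
  have "cj ((u2 - u3) * (u - u1)) * ((u2 - u1) * (u - u3))
      = ((u3 - u2) * (u1 - u) * (u2 - u1) * (u - u3)) / (u * u1 * u2 * u3)"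
    using U_nz u by (simp add: U_cj[OF u(1)] U_cj[OF u(2)] U_cj[OF u(3)] U_cj[OF u(4)] field_simps)
  also have "\<dots> = ((u2 - u3) * (u - u1) * (u1 - u2) * (u3 - u)) / (u * u1 * u2 * u3)"
    by (simp add: algebra_simps del: neg diff)
  also have "\<dots> = (u2 - u3) * (u - u1) * cj ((u2 - u1) * (u - u3))"
    using U_nz u by (simp add: U_cj[OF u(1)] U_cj[OF u(2)] U_cj[OF u(3)] U_cj[OF u(4)] field_simps)
  finally show "cj ((u2 - u3) * (u - u1)) * ((u2 - u1) * (u - u3)) = (u2 - u3) * (u - u1) * cj ((u2 - u1) * (u - u3))" .
qed

lemma claimB:
  assumes v: "v1 \<in> U" "v2 \<in> U" "v3 \<in> U" and d: "v1 \<noteq> v2" "v1 \<noteq> v3" "v2 \<noteq> v3"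
    and w: "cj w = w"
  shows "- (v2 - v1) * w + (v2 - v3) \<noteq> 0"
    and "pm (- v3 * (v2 - v1), v1 * (v2 - v3), - (v2 - v1), v2 - v3) w \<in> U"
proof -
  have nz: "v1 \<noteq> 0" "v2 \<noteq> 0" "v3 \<noteq> 0" using U_nz v by auto
  have cv: "cj v1 = inverse v1" "cj v2 = inverse v2" "cj v3 = inverse v3" using U_cj v by auto
  define N where "N = - v3 * (v2 - v1) * w + v1 * (v2 - v3)"
  define Dn where "Dn = - (v2 - v1) * w + (v2 - v3)"
  show D0: "- (v2 - v1) * w + (v2 - v3) \<noteq> 0"
  proof
    assume "- (v2 - v1) * w + (v2 - v3) = 0"
    then have e: "w * (v2 - v1) = v2 - v3" by (simp add: algebra_simps del: neg diff)
    then have "cj w * cj (v2 - v1) = cj (v2 - v3)" by (metis cj_mult)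
    then have "w * (inverse v2 - inverse v1) = inverse v2 - inverse v3"
      by (simp only: w cj_diff cv)
    then have "w * (inverse v2 - inverse v1) * (v1 * v2 * v3) = (inverse v2 - inverse v3) * (v1 * v2 * v3)"
      by simp
    moreover have "w * (inverse v2 - inverse v1) * (v1 * v2 * v3) = w * (v1 - v2) * v3"
      using nz by (simp add: field_simps del: neg diff)
    moreover have "(inverse v2 - inverse v3) * (v1 * v2 * v3) = (v3 - v2) * v1"
      using nz by (simp add: field_simps del: neg diff)
    ultimately have h: "w * (v1 - v2) * v3 = (v3 - v2) * v1" by simp
    have "(v2 - v3) * v3 = (v2 - v3) * v1" using h e by algebra
    then show False using d by simp
  qed
  have cN: "cj N = - Dn / (v1 * v2 * v3)"
    using nz by (simp add: N_def Dn_def cv w field_simps)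
  have cD: "cj Dn = - N / (v1 * v2 * v3)"
    using nz by (simp add: N_def Dn_def cv w field_simps)
  have Dn0: "Dn \<noteq> 0" using D0 by (simp add: Dn_def)
  have N0: "N \<noteq> 0"
  proof
    assume "N = 0"
    then have "cj Dn = 0" using cD by simp
    then show False using Dn0 by simp
  qed
  have "pm (- v3 * (v2 - v1), v1 * (v2 - v3), - (v2 - v1), v2 - v3) w = N / Dn"
    by (simp add: N_def Dn_def del: neg diff)
  moreover have "N / Dn * cj (N / Dn) = 1"
    using nz N0 Dn0 by (simp add: cN cD field_simps)
  ultimately show "pm (- v3 * (v2 - v1), v1 * (v2 - v3), - (v2 - v1), v2 - v3) w \<in> U"
    by (simp add: U_iff del: pm.simps)
qed

lemma stabI:
  assumes det: "a * d - b * c \<noteq> 0"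
    and pt: "\<And>u. u \<in> U \<Longrightarrow> c * u + d \<noteq> 0 \<and> pm (a, b, c, d) u \<in> U"
  shows "(a, b, c, d) \<in> stab U"
proof -
  have inj: "inj_on (pm (a, b, c, d)) U"
    by (rule inj_onI) (use pt det pm_inj in blast)
  have sub: "pm (a, b, c, d) ` U \<subseteq> U" using pt by auto
  have eq: "pm (a, b, c, d) ` U = U" by (rule endo_inj_surj[OF _ sub inj]) simp
  have "mob (a, b, c, d) ` (Some ` U) = Some ` (pm (a, b, c, d) ` U)"
  proof -
    have "mob (a, b, c, d) (Some u) = Some (pm (a, b, c, d) u)" if "u \<in> U" for u
      using mob_pm[of c u d a b] pt[OF that] by blast
    then show ?thesis by (auto simp: image_image simp del: pm.simps)
  qed
  then show ?thesis using det eq by (simp add: stab_def del: pm.simps neg diff)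
qed

lemma trans3:
  assumes u: "u1 \<in> U" "u2 \<in> U" "u3 \<in> U" "u1 \<noteq> u2" "u1 \<noteq> u3" "u2 \<noteq> u3"
    and v: "v1 \<in> U" "v2 \<in> U" "v3 \<in> U" "v1 \<noteq> v2" "v1 \<noteq> v3" "v2 \<noteq> v3"
  obtains M where "M \<in> stab U" "pm M u1 = v1" "pm M u2 = v2" "pm M u3 = v3"
proof -
  define s1 where "s1 = u2 - u3"
  define t1 where "t1 = u2 - u1"
  define s2 where "s2 = v2 - v3"
  define t2 where "t2 = v2 - v1"
  have s1: "s1 \<noteq> 0" and t1: "t1 \<noteq> 0" and s2: "s2 \<noteq> 0" and t2: "t2 \<noteq> 0"
    using u v by (auto simp: s1_def t1_def s2_def t2_def simp del: neg diff)
  define A where "A = - v3 * t2"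
  define B where "B = v1 * s2"
  define C where "C = - t2"
  define D where "D = s2"
  define a where "a = s1"
  define b where "b = - u1 * s1"
  define c where "c = t1"
  define d where "d = - u3 * t1"
  let ?M = "(A * a + B * c, A * b + B * d, C * a + D * c, C * b + D * d)"
  have gen: "(C * a + D * c) * u + (C * b + D * d) \<noteq> 0 \<and> pm ?M u = pm (A, B, C, D) (pm (a, b, c, d) u)
      \<and> pm ?M u \<in> U"
    if uU: "u \<in> U" and u3: "u \<noteq> u3" for u
  proof -
    have d1: "c * u + d \<noteq> 0" using t1 u3 by (simp add: c_def d_def algebra_simps del: neg diff)
    have weq: "pm (a, b, c, d) u = (u2 - u3) * (u - u1) / ((u2 - u1) * (u - u3))"
      by (simp add: a_def b_def c_def d_def s1_def t1_def algebra_simps del: neg diff)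
    have cw: "cj (pm (a, b, c, d) u) = pm (a, b, c, d) u"
      unfolding weq by (rule claimA[OF uU u(1-3) u(4) u(6) u3])
    note cB = claimB[OF v cw]
    have d2: "C * pm (a, b, c, d) u + D \<noteq> 0" using cB(1) by (simp add: C_def D_def t2_def s2_def del: pm.simps neg diff)
    have inU: "pm (A, B, C, D) (pm (a, b, c, d) u) \<in> U"
      using cB(2) by (simp add: A_def B_def C_def D_def t2_def s2_def del: pm.simps neg diff)
    show ?thesis using pm_comp(1)[OF d1 d2] pm_comp(2)[OF d1 d2, where A=A and B=B] inU by simp
  qed
  have at3: "(C * a + D * c) * u3 + (C * b + D * d) \<noteq> 0 \<and> pm ?M u3 = v3"
  proof -
    have e1: "(C * a + D * c) * u3 + (C * b + D * d) = t2 * s1 * (u1 - u3)"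
      by (simp add: A_def B_def C_def D_def a_def b_def c_def d_def algebra_simps del: neg diff)
    have e2: "(A * a + B * c) * u3 + (A * b + B * d) = v3 * (t2 * s1 * (u1 - u3))"
      by (simp add: A_def B_def C_def D_def a_def b_def c_def d_def algebra_simps del: neg diff)
    have nz: "t2 * s1 * (u1 - u3) \<noteq> 0" using t2 s1 u(5) by simp
    show ?thesis using e1 e2 nz by simp
  qed
  have pt: "(C * a + D * c) * u + (C * b + D * d) \<noteq> 0 \<and> pm ?M u \<in> U" if "u \<in> U" for u
    using gen[OF that] at3 v(3) by (cases "u = u3") auto
  have det: "(A * a + B * c) * (C * b + D * d) - (A * b + B * d) * (C * a + D * c)
      = (A * D - B * C) * (a * d - b * c)" by (simp add: algebra_simps del: neg diff)
  have detN: "a * d - b * c = s1 * t1 * (u1 - u3)"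
    by (simp add: a_def b_def c_def d_def algebra_simps del: neg diff)
  have detA: "A * D - B * C = s2 * t2 * (v1 - v3)"
    by (simp add: A_def B_def C_def D_def algebra_simps del: neg diff)
  have "(A * a + B * c) * (C * b + D * d) - (A * b + B * d) * (C * a + D * c) \<noteq> 0"
    unfolding det detN detA using s1 t1 s2 t2 u(5) v(5) by simp
  then have MS: "?M \<in> stab U" by (rule stabI) (use pt in blast)
  have p1: "pm ?M u1 = v1"
  proof -
    have w0: "pm (a, b, c, d) u1 = 0" by (simp add: a_def b_def algebra_simps del: neg diff)
    have "pm ?M u1 = pm (A, B, C, D) (pm (a, b, c, d) u1)" using gen[OF u(1) u(5)] by blast
    also have "\<dots> = pm (A, B, C, D) 0" by (simp only: w0)
    also have "\<dots> = v1" using s2 by (simp add: B_def D_def del: neg diff)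
    finally show ?thesis .
  qed
  have p2: "pm ?M u2 = v2"
  proof -
    have n1: "a * u2 + b = s1 * t1" by (simp add: a_def b_def t1_def algebra_simps del: neg diff)
    have n2: "c * u2 + d = s1 * t1" by (simp add: c_def d_def s1_def algebra_simps del: neg diff)
    have "pm (a, b, c, d) u2 = 1" using s1 t1 by (simp only: pm.simps n1 n2) simp
    moreover have "pm (A, B, C, D) 1 = v2"
    proof -
      have "- t2 + s2 \<noteq> 0" using v(5) by (simp add: t2_def s2_def algebra_simps del: neg diff)
      moreover have "- v3 * t2 + v1 * s2 = v2 * (- t2 + s2)"
        by (simp add: t2_def s2_def algebra_simps del: neg diff)
      ultimately show ?thesis by (simp add: A_def B_def C_def D_def del: neg diff)
    qed
    ultimately show ?thesis using gen[OF u(2) u(6)] by (simp del: pm.simps)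
  qed
  show ?thesis using that[OF MS p1 p2] at3 by blast
qed

lemma count_le:
  assumes T1: "T1 \<subseteq> U" "card T1 = 3" and T2: "T2 \<subseteq> U" "card T2 = 3"
  shows "card {B \<in> blocks_k U k (trace_code q (code35 q)). T1 \<subseteq> B}
       \<le> card {B \<in> blocks_k U k (trace_code q (code35 q)). T2 \<subseteq> B}"
proof -
  let ?Bs = "blocks_k U k (trace_code q (code35 q))"
  obtain u1 u2 u3 where t1: "T1 = {u1, u2, u3}" "u1 \<noteq> u2" "u2 \<noteq> u3" "u1 \<noteq> u3"
    using T1(2) by (auto simp: card_3_iff)
  obtain v1 v2 v3 where t2: "T2 = {v1, v2, v3}" "v1 \<noteq> v2" "v2 \<noteq> v3" "v1 \<noteq> v3"
    using T2(2) by (auto simp: card_3_iff)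
  have uU: "u1 \<in> U" "u2 \<in> U" "u3 \<in> U" using T1(1) t1(1) by auto
  have vU: "v1 \<in> U" "v2 \<in> U" "v3 \<in> U" using T2(1) t2(1) by auto
  obtain M where M: "M \<in> stab U" "pm M u1 = v1" "pm M u2 = v2" "pm M u3 = v3"
    using trans3[OF uU t1(2) t1(4) t1(3) vU t2(2) t2(4) t2(3)] by blast
  obtain a b c d where Md: "M = (a, b, c, d)" by (cases M) auto
  have MS: "(a, b, c, d) \<in> stab U" using M(1) Md by simp
  have img: "pm M ` T1 = T2" using M t1(1) t2(1) by auto
  have BsU: "\<And>B. B \<in> ?Bs \<Longrightarrow> B \<subseteq> U" by (auto simp: blocks_k_def supp_on_def)
  have fin: "finite {B \<in> ?Bs. T2 \<subseteq> B}"
  proof (rule finite_subset)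
    show "{B \<in> ?Bs. T2 \<subseteq> B} \<subseteq> Pow U" using BsU by auto
  qed simp
  have inj: "inj_on (\<lambda>B. pm M ` B) {B \<in> ?Bs. T1 \<subseteq> B}"
  proof (rule inj_onI)
    fix X Y assume X: "X \<in> {B \<in> ?Bs. T1 \<subseteq> B}" and Y: "Y \<in> {B \<in> ?Bs. T1 \<subseteq> B}"
      and e: "pm M ` X = pm M ` Y"
    have "X \<subseteq> U" "Y \<subseteq> U" using X Y BsU by auto
    then show "X = Y" using e inj_on_image_eq_iff[OF stab_basic(4)[OF MS]] Md by metis
  qed
  have maps: "(\<lambda>B. pm M ` B) ` {B \<in> ?Bs. T1 \<subseteq> B} \<subseteq> {B \<in> ?Bs. T2 \<subseteq> B}"
  proof
    fix Z assume "Z \<in> (\<lambda>B. pm M ` B) ` {B \<in> ?Bs. T1 \<subseteq> B}"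
    then obtain B where B: "B \<in> ?Bs" "T1 \<subseteq> B" and Z: "Z = pm M ` B" by auto
    have "Z \<in> ?Bs" using block_image[OF B(1) MS] Z Md by simp
    moreover have "T2 \<subseteq> Z" using img B(2) Z by auto
    ultimately show "Z \<in> {B \<in> ?Bs. T2 \<subseteq> B}" by simp
  qed
  show ?thesis by (rule card_inj_on_le[OF inj maps fin])
qed

lemma design:
  assumes k3: "3 < k" and ex: "\<exists>c \<in> trace_code q (code35 q). card (supp_on U c) = k"
  shows "is_t_design 3 U (blocks_k U k (trace_code q (code35 q)))"
proof -
  let ?Bs = "blocks_k U k (trace_code q (code35 q))"
  obtain c0 where c0: "c0 \<in> trace_code q (code35 q)" "card (supp_on U c0) = k" using ex by blast
  let ?B0 = "supp_on U c0"
  have B0: "?B0 \<in> ?Bs" using c0 by (auto simp: blocks_k_def)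
  have B0U: "?B0 \<subseteq> U" by (auto simp: supp_on_def)
  obtain T0 where T0: "T0 \<subseteq> ?B0" "card T0 = 3"
    using obtain_subset_with_card_n[of 3 ?B0] c0(2) k3 by auto
  have T0U: "T0 \<subseteq> U" using T0 B0U by auto
  have BsU: "\<And>B. B \<in> ?Bs \<Longrightarrow> B \<subseteq> U" by (auto simp: blocks_k_def supp_on_def)
  define lam where "lam = card {B \<in> ?Bs. T0 \<subseteq> B}"
  have fin: "finite {B \<in> ?Bs. T0 \<subseteq> B}"
  proof (rule finite_subset)
    show "{B \<in> ?Bs. T0 \<subseteq> B} \<subseteq> Pow U" using BsU by auto
  qed simp
  have "?B0 \<in> {B \<in> ?Bs. T0 \<subseteq> B}" using B0 T0 by simp
  then have lam0: "lam > 0" unfolding lam_def using fin card_gt_0_iff by blast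
  have "card {B \<in> ?Bs. T \<subseteq> B} = lam" if "T \<subseteq> U" "card T = 3" for T
    unfolding lam_def using count_le[OF that T0U T0(2), of k] count_le[OF T0U T0(2) that, of k] by simp
  then show ?thesis unfolding is_t_design_def using BsU lam0 by blast
qed

end



theorem theorem23:
  fixes m q k :: nat
  assumes "m \<ge> 2" and "q = 2 ^ m"
    and "card (UNIV :: 'a::{field,finite} set) = q ^ 2"
    and "1 \<le> k" and "k \<le> q + 1"
    and "\<exists>c \<in> trace_code q (code35 q). card (supp_on (Uroots q :: 'a set) c) = k"
  shows "(\<forall>B \<in> blocks_k (Uroots q :: 'a set) k (trace_code q (code35 q)).
            \<forall>M \<in> stab (Uroots q :: 'a set).
              mob M ` (Some ` B) \<in> (\<lambda>X. Some ` X) ` blocks_k (Uroots q :: 'a set) k (trace_code q (code35 q)))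
      \<and> (k > 3 \<longrightarrow> is_t_design 3 (Uroots q :: 'a set) (blocks_k (Uroots q) k (trace_code q (code35 q))))"
proof -
  interpret G: gf q m "Uroots q :: 'a set"
    by unfold_locales (use assms in auto)
  show ?thesis
    using G.part1 G.design assms(6) by blast
qed

end
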